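(* Under the standing setting and assumptions (A1)–(A3) described in the context, assume $\mathcal R(X)\neq\emptyset$ for all $X\in\mathcal X$ and that for any distinct $X,Y\in\partial\mathcal A$ with $X-Y\in\ker(\pi)$ there exists $\lambda\in(0,1)$ with $\lambda X+(1-\lambda)Y\in\mathrm{int}\,\mathcal A$. Then $|\mathcal R(X)|=1$ for all $X\in\mathcal X$.
   Context: Let $\mathcal X$ be a Hausdorff, first countable, locally convex topological vector space over $\mathbb R$, partially ordered by a partial order $\geq$ with positive cone $\mathcal X_+=\{X\in\mathcal X: X\geq 0\}$. Let $\mathcal M\subset\mathcal X$ be a vector subspace with $1<\dim\mathcal M<\infty$, carrying the relative topology, and let $\pi:\mathcal M\to\mathbb R$ be linear with $\ker(\pi)=\{Z\in\mathcal M:\pi(Z)=0\}$. Standing assumptions: (A1) there is $U\in\mathcal M\cap\mathcal X_+$ with $\pi(U)=1$; (A2) $\mathcal A\subsetneq\mathcal X$ is closed, contains $0$, and satisfies $\mathcal A+\mathcal X_+\subset\mathcal A$; (A3) the map $\rho(X)=\inf\{\pi(Z): Z\in\mathcal M,\ X+Z\in\mathcal A\}$ is finitely valued and continuous on $\mathcal X$. The optimal payoff map is $\mathcal R(X)=\{Z\in\mathcal M: X+Z\in\mathcal A,\ \pi(Z)=\rho(X)\}$; $|\cdot|$ is cardinality. $\partial$ and $\mathrm{int}$ denote boundary and interior in $\mathcal X$. *)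

theory Defs
  imports "HOL-Analysis.Analysis"
begin

definition tvs_ops_continuous :: "'a::{real_vector,topological_space} itself \<Rightarrow> bool" where
  "tvs_ops_continuous _ \<longleftrightarrow>
     continuous_on (UNIV :: ('a \<times> 'a) set) (\<lambda>(x, y). x + y) \<and>
     continuous_on (UNIV :: (real \<times> 'a) set) (\<lambda>(c, x). c *\<^sub>R x)"

definition locally_convex :: "'a::{real_vector,topological_space} itself \<Rightarrow> bool" where
  "locally_convex _ \<longleftrightarrow>
     (\<forall>W :: 'a set. open W \<and> 0 \<in> W \<longrightarrow> (\<exists>V. open V \<and> convex V \<and> 0 \<in> V \<and> V \<subseteq> W))"

definition linear_on_subspace :: "'a::real_vector set \<Rightarrow> ('a \<Rightarrow> real) \<Rightarrow> bool" where
  "linear_on_subspace M p \<longleftrightarrow>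
     (\<forall>x\<in>M. \<forall>y\<in>M. p (x + y) = p x + p y) \<and> (\<forall>c. \<forall>x\<in>M. p (c *\<^sub>R x) = c * p x)"

definition rho :: "'a::real_vector set \<Rightarrow> ('a \<Rightarrow> real) \<Rightarrow> 'a set \<Rightarrow> 'a \<Rightarrow> real" where
  "rho M p A X = Inf {p Z | Z. Z \<in> M \<and> X + Z \<in> A}"

definition optimal_payoffs :: "'a::real_vector set \<Rightarrow> ('a \<Rightarrow> real) \<Rightarrow> 'a set \<Rightarrow> 'a \<Rightarrow> 'a set" where
  "optimal_payoffs M p A X = {Z \<in> M. X + Z \<in> A \<and> p Z = rho M p A X}"

end

theory Submission
  imports Defs
begin

lemma key:
  fixes M :: "'a::{real_vector, topological_space} set" and p :: "'a \<Rightarrow> real"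
  assumes tvs: "tvs_ops_continuous TYPE('a)"
    and M_sub: "subspace M"
    and p_lin: "linear_on_subspace M p"
    and U: "U \<in> M" "p U = 1"
    and bdd: "bdd_below {p Z | Z. Z \<in> M \<and> X + Z \<in> A}"
    and Z: "Z \<in> M" and int: "X + Z \<in> interior A"
  shows "rho M p A X < p Z"
proof -
  define f where "f = (\<lambda>t::real. (\<lambda>(x, y). x + y) ((\<lambda>t. (X + Z, (\<lambda>(c, x). c *\<^sub>R x) (-t, U))) t))"
  have c1: "continuous_on (UNIV :: ('a \<times> 'a) set) (\<lambda>(x, y). x + y)"
   and c2: "continuous_on (UNIV :: (real \<times> 'a) set) (\<lambda>(c, x). c *\<^sub>R x)"
    using tvs unfolding tvs_ops_continuous_def by auto
  have c3: "continuous_on UNIV (\<lambda>t::real. (\<lambda>(c, x). c *\<^sub>R x) (-t, U))"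
    by (rule continuous_on_compose2[OF c2]) (auto intro!: continuous_intros)
  have c4: "continuous_on UNIV (\<lambda>t::real. (X + Z, (\<lambda>(c, x). c *\<^sub>R x) (-t, U)))"
    using c3 by (auto intro!: continuous_intros)
  have cf: "continuous_on UNIV f"
    unfolding f_def by (rule continuous_on_compose2[OF c1 c4]) auto
  have "open (f -` interior A)"
    using continuous_on_open_vimage[OF open_UNIV] cf by auto
  moreover have "0 \<in> f -` interior A" using int by (simp add: f_def)
  ultimately obtain e where e: "e > 0" "ball 0 e \<subseteq> f -` interior A"
    by (meson open_contains_ball)
  have "e/2 \<in> ball 0 e" using e by simp
  then have "f (e/2) \<in> A" using e interior_subset by blast
  then have inA: "X + (Z + (-(e/2)) *\<^sub>R U) \<in> A" by (simp add: f_def algebra_simps)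
  have inM: "Z + (-(e/2)) *\<^sub>R U \<in> M" using M_sub Z U by (simp add: subspace_diff subspace_scale)
  have "p (Z + (-(e/2)) *\<^sub>R U) = p Z - e/2"
    using p_lin Z U inM unfolding linear_on_subspace_def
    by (metis (no_types, lifting) M_sub mult.right_neutral subspace_scale uminus_add_conv_diff add.commute)
  moreover have "rho M p A X \<le> p (Z + (-(e/2)) *\<^sub>R U)"
    unfolding rho_def using inA inM bdd by (intro cInf_lower) auto
  ultimately show ?thesis using e by linarith
qed

theorem mainTheorem13:
  fixes Ord :: "('a::{real_vector, t2_space, first_countable_topology} \<times> 'a) set"
    and M :: "'a set" and p :: "'a \<Rightarrow> real" and A :: "'a set"
  assumes tvs: "tvs_ops_continuous TYPE('a)"
    and lc: "locally_convex TYPE('a)"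
    and ord: "partial_order_on UNIV Ord"
    and M_sub: "subspace M"
    and M_fin: "\<exists>B. finite B \<and> independent B \<and> span B = M"
    and M_dim: "1 < dim M"
    and p_lin: "linear_on_subspace M p"
    and A1: "\<exists>U\<in>M. (0, U) \<in> Ord \<and> p U = 1"
    and A2: "A \<noteq> UNIV" "closed A" "0 \<in> A"
            "\<forall>X\<in>A. \<forall>Y. (0, Y) \<in> Ord \<longrightarrow> X + Y \<in> A"
    and A3_fin: "\<forall>X. {p Z | Z. Z \<in> M \<and> X + Z \<in> A} \<noteq> {} \<and> bdd_below {p Z | Z. Z \<in> M \<and> X + Z \<in> A}"
    and A3_cont: "continuous_on UNIV (rho M p A)"
    and nonempty: "\<forall>X. optimal_payoffs M p A X \<noteq> {}"
    and strict: "\<forall>X\<in>frontier A. \<forall>Y\<in>frontier A. X \<noteq> Y \<and> X - Y \<in> M \<and> p (X - Y) = 0 \<longrightarrow>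
                   (\<exists>l. 0 < l \<and> l < 1 \<and> l *\<^sub>R X + (1 - l) *\<^sub>R Y \<in> interior A)"
  shows "\<forall>X. card (optimal_payoffs M p A X) = 1"
proof
  fix X
  obtain U where U: "U \<in> M" "p U = 1" using A1 by blast
  have bdd: "bdd_below {p Z | Z. Z \<in> M \<and> X + Z \<in> A}" using spec[OF A3_fin, of X] by (elim conjE)
  have notint: "X + Z \<notin> interior A" if "Z \<in> optimal_payoffs M p A X" for Z
    using key[OF tvs M_sub p_lin U bdd, of Z] that unfolding optimal_payoffs_def by auto
  have fr: "X + Z \<in> frontier A" if "Z \<in> optimal_payoffs M p A X" for Z
    using notint[OF that] that A2(2) closure_subset unfolding optimal_payoffs_def frontier_def
    by auto
  have uniq: "Z1 = Z2" if z1: "Z1 \<in> optimal_payoffs M p A X" and z2: "Z2 \<in> optimal_payoffs M p A X" for Z1 Z2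
  proof (rule ccontr)
    assume ne: "Z1 \<noteq> Z2"
    have m: "Z1 \<in> M" "Z2 \<in> M" "p Z1 = rho M p A X" "p Z2 = rho M p A X"
      using z1 z2 unfolding optimal_payoffs_def by auto
    have dM: "Z1 - Z2 \<in> M" using m M_sub by (simp add: subspace_diff)
    have "p (Z1 - Z2) = 0"
    proof -
      have s: "(-1) *\<^sub>R Z2 \<in> M" using m M_sub by (intro subspace_scale)
      have "p (Z1 + (-1) *\<^sub>R Z2) = p Z1 + p ((-1) *\<^sub>R Z2)"
        using p_lin m s unfolding linear_on_subspace_def by blast
      also have "p ((-1) *\<^sub>R Z2) = (-1) * p Z2"
        using p_lin m unfolding linear_on_subspace_def by blast
      finally show ?thesis using m by simp
    qed
    then obtain l where l: "0 < l" "l < 1" "l *\<^sub>R (X + Z1) + (1 - l) *\<^sub>R (X + Z2) \<in> interior A"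
    proof -
      have "(X + Z1) - (X + Z2) = Z1 - Z2" by simp
      moreover have "X + Z1 \<noteq> X + Z2" using ne by simp
      ultimately show ?thesis using strict fr[OF z1] fr[OF z2] dM \<open>p (Z1 - Z2) = 0\<close> that by metis
    qed
    define W where "W = l *\<^sub>R Z1 + (1 - l) *\<^sub>R Z2"
    have eq: "l *\<^sub>R (X + Z1) + (1 - l) *\<^sub>R (X + Z2) = X + W"
      unfolding W_def by (simp add: algebra_simps)
    have WM: "W \<in> M" unfolding W_def using m M_sub by (simp add: subspace_add subspace_scale)
    have "p W = l * p Z1 + (1 - l) * p Z2"
      using p_lin m M_sub unfolding linear_on_subspace_def W_def by (simp add: subspace_scale)
    then have pW: "p W = rho M p A X" using m by (simp add: algebra_simps)
    have "rho M p A X < p W" using key[OF tvs M_sub p_lin U bdd WM] l eq by simp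
    then show False using pW by simp
  qed
  obtain Z where "Z \<in> optimal_payoffs M p A X" using nonempty by blast
  then have "optimal_payoffs M p A X = {Z}" using uniq by blast
  then show "card (optimal_payoffs M p A X) = 1" by simp
qed

end
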